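(* Let $i\ge 0$ and let $K_1,K_2$ be finite simplicial complexes such that $B_i(K_1)$ and $B_i(K_2)$ are connected ($K_1,K_2$ are $(i+1)$-path connected). Then $B_i(K_1\Box K_2)$ is balanced if and only if $B_i(K_1)$ and $B_i(K_2)$ are both balanced.
   Context: The Cartesian product $K_1\Box K_2$ is the complex on $V(K_1)\times V(K_2)$ whose faces are $F\times v=\{(u_0,v),\dots,(u_s,v)\}$ for $F=\{u_0,\dots,u_s\}\in K_1$, $v\in V(K_2)$, and $u\times F'=\{(u,v_0),\dots,(u,v_t)\}$ for $u\in V(K_1)$, $F'=\{v_0,\dots,v_t\}\in K_2$. $S_j(K)$ is the set of faces of cardinality $j+1$. For a complex $K$ with an orientation (ordering of each face up to even permutations), $B_i(K)$ is the signed bipartite graph on $S_i(K)\cup S_{i+1}(K)$ with edges $\{F,\bar F\}$ for $F\subset\bar F$, signed by the boundary incidence sign $\mathrm{sgn}([F],\partial[\bar F])\in\{\pm1\}$ ($(-1)^j$ if $F$ is $\bar F$ minus its $j$-th vertex with agreeing orientation, negated otherwise). A signed graph is balanced if every cycle has positive sign product; this is independent of the orientation. *)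

theory Defs
  imports Main "HOL-Combinatorics.Permutations"
begin

definition simplicial_complex :: "'a set set \<Rightarrow> bool" where
  "simplicial_complex K \<longleftrightarrow> finite K \<and>
     (\<forall>F\<in>K. finite F \<and> F \<noteq> {} \<and> (\<forall>G. G \<subseteq> F \<and> G \<noteq> {} \<longrightarrow> G \<in> K))"

definition vertices :: "'a set set \<Rightarrow> 'a set" where
  "vertices K = \<Union>K"

definition faces_of_dim :: "'a set set \<Rightarrow> nat \<Rightarrow> 'a set set" where
  "faces_of_dim K j = {F \<in> K. card F = j + 1}"

definition cart_prod :: "'a set set \<Rightarrow> 'b set set \<Rightarrow> ('a \<times> 'b) set set" where
  "cart_prod K1 K2 =
     {(\<lambda>u. (u, v)) ` F | F v. F \<in> K1 \<and> v \<in> vertices K2} \<union>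
     {(\<lambda>v. (u, v)) ` F' | u F'. u \<in> vertices K1 \<and> F' \<in> K2}"

text \<open>An orientation: a representative ordering (distinct list) of each face;
  orderings are only relevant up to even permutations.\<close>
definition orientation :: "'a set set \<Rightarrow> ('a set \<Rightarrow> 'a list) \<Rightarrow> bool" where
  "orientation K ori \<longleftrightarrow> (\<forall>F\<in>K. distinct (ori F) \<and> set (ori F) = F)"

definition list_perm :: "'a list \<Rightarrow> 'a list \<Rightarrow> 'a \<Rightarrow> 'a" where
  "list_perm xs ys = (\<lambda>x. case map_of (zip xs ys) x of Some y \<Rightarrow> y | None \<Rightarrow> x)"

text \<open>Boundary incidence sign sgn([F], \<partial>[Fb]) for F \<subset> Fb with |Fb| = |F| + 1:
  Fb is ordered as L = ori Fb, F = Fb minus the j-th entry of L; the induced ordering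
  of F is L with that entry deleted; the sign is (-1)^j if it agrees (up to even
  permutation) with ori F, and negated otherwise.\<close>
definition incidence_sign :: "('a set \<Rightarrow> 'a list) \<Rightarrow> 'a set \<Rightarrow> 'a set \<Rightarrow> int" where
  "incidence_sign ori F Fb =
     (let L = ori Fb;
          j = (THE j. j < length L \<and> L ! j \<notin> F);
          L' = take j L @ drop (Suc j) L
      in (-1) ^ j * sign (list_perm L' (ori F)))"

definition B_verts :: "'a set set \<Rightarrow> nat \<Rightarrow> 'a set set" where
  "B_verts K i = faces_of_dim K i \<union> faces_of_dim K (i + 1)"

definition B_adj :: "'a set set \<Rightarrow> nat \<Rightarrow> 'a set \<Rightarrow> 'a set \<Rightarrow> bool" where
  "B_adj K i X Y \<longleftrightarrow>
     (X \<in> faces_of_dim K i \<and> Y \<in> faces_of_dim K (i + 1) \<and> X \<subseteq> Y) \<or>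
     (Y \<in> faces_of_dim K i \<and> X \<in> faces_of_dim K (i + 1) \<and> Y \<subseteq> X)"

definition B_sign :: "('a set \<Rightarrow> 'a list) \<Rightarrow> 'a set \<Rightarrow> 'a set \<Rightarrow> int" where
  "B_sign ori X Y = (if X \<subseteq> Y then incidence_sign ori X Y else incidence_sign ori Y X)"

definition B_connected :: "'a set set \<Rightarrow> nat \<Rightarrow> bool" where
  "B_connected K i \<longleftrightarrow> B_verts K i \<noteq> {} \<and>
     (\<forall>X\<in>B_verts K i. \<forall>Y\<in>B_verts K i. \<exists>ws. ws \<noteq> [] \<and> hd ws = X \<and> last ws = Y \<and>
        (\<forall>k. Suc k < length ws \<longrightarrow> B_adj K i (ws ! k) (ws ! Suc k)))"

definition B_cycle :: "'a set set \<Rightarrow> nat \<Rightarrow> 'a set list \<Rightarrow> bool" where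
  "B_cycle K i cs \<longleftrightarrow> length cs \<ge> 3 \<and> distinct cs \<and> set cs \<subseteq> B_verts K i \<and>
     (\<forall>k < length cs. B_adj K i (cs ! k) (cs ! ((k + 1) mod length cs)))"

definition B_balanced :: "'a set set \<Rightarrow> nat \<Rightarrow> ('a set \<Rightarrow> 'a list) \<Rightarrow> bool" where
  "B_balanced K i ori \<longleftrightarrow>
     (\<forall>cs. B_cycle K i cs \<longrightarrow>
        (\<Prod>k<length cs. B_sign ori (cs ! k) (cs ! ((k + 1) mod length cs))) = 1)"

end

theory Submission
  imports Defs
begin

definition idx :: "'a list \<Rightarrow> 'a \<Rightarrow> nat" where
  "idx xs x = length (takeWhile (\<lambda>y. y \<noteq> x) xs)"

lemma idx_Nil[simp]: "idx [] x = 0" by (simp add: idx_def)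
lemma idx_Cons[simp]: "idx (y#ys) x = (if y = x then 0 else Suc (idx ys x))"
  by (simp add: idx_def)

lemma idx_append: "x \<notin> set as \<Longrightarrow> idx (as @ x # bs) x = length as"
  by (induction as) auto

lemma idx_nth: "x \<in> set L \<Longrightarrow> idx L x < length L \<and> L ! idx L x = x"
  by (induction L) auto

fun psign :: "'a list \<Rightarrow> 'a list \<Rightarrow> int" where
  "psign [] ys = 1"
| "psign (x#xs) ys = (-1)^(idx ys x) * psign xs (remove1 x ys)"

lemma psign_pm: "psign xs ys = 1 \<or> psign xs ys = -1"
  by (induction xs arbitrary: ys) (auto simp: minus_one_power_iff)

lemma psign_refl: "psign xs xs = 1"
  by (induction xs) auto

lemma list_perm_nth:
  assumes "distinct xs" "length xs = length ys" "k < length xs"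
  shows "list_perm xs ys (xs ! k) = ys ! k"
  using assms map_of_zip_nth[of xs ys k] by (simp add: list_perm_def)

lemma list_perm_notin:
  assumes "length xs = length ys" "x \<notin> set xs"
  shows "list_perm xs ys x = x"
proof -
  have "map_of (zip xs ys) x = None" using assms by simp
  then show ?thesis by (simp add: list_perm_def)
qed

lemma list_perm_permutes:
  assumes "distinct xs" "distinct ys" "set xs = set ys"
  shows "list_perm xs ys permutes set xs"
proof -
  have len: "length xs = length ys" using assms distinct_card by metis
  show ?thesis
  proof (rule bij_imp_permutes)
    show "\<And>x. x \<notin> set xs \<Longrightarrow> list_perm xs ys x = x" using list_perm_notin len by metis
    have "inj_on (list_perm xs ys) (set xs)"
    proof (rule inj_onI)
      fix a b assume a: "a \<in> set xs" and b: "b \<in> set xs" and e: "list_perm xs ys a = list_perm xs ys b"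
      obtain k where k: "k < length xs" "a = xs ! k" using a by (metis in_set_conv_nth)
      obtain l where l: "l < length xs" "b = xs ! l" using b by (metis in_set_conv_nth)
      have "ys ! k = ys ! l" using e k l list_perm_nth[OF assms(1) len] by simp
      then have "k = l" using k l len assms(2) nth_eq_iff_index_eq by metis
      then show "a = b" using k l by simp
    qed
    moreover have "list_perm xs ys ` set xs = set xs"
    proof -
      have "list_perm xs ys ` set xs = set ys"
      proof
        show "list_perm xs ys ` set xs \<subseteq> set ys"
        proof
          fix y assume "y \<in> list_perm xs ys ` set xs"
          then obtain z where "z \<in> set xs" "y = list_perm xs ys z" by blast
          then obtain k where "k < length xs" "z = xs ! k" by (metis in_set_conv_nth)
          then show "y \<in> set ys" using list_perm_nth[OF assms(1) len] len \<open>y = _\<close> by simp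
        qed
        show "set ys \<subseteq> list_perm xs ys ` set xs"
        proof
          fix y assume "y \<in> set ys"
          then obtain k where "k < length ys" "y = ys ! k" by (metis in_set_conv_nth)
          then show "y \<in> list_perm xs ys ` set xs"
            using list_perm_nth[OF assms(1) len, of k] len by (metis image_eqI nth_mem)
        qed
      qed
      then show ?thesis using assms by simp
    qed
    ultimately show "bij_betw (list_perm xs ys) (set xs) (set xs)" by (simp add: bij_betw_def)
  qed
qed

lemma list_perm_permutation:
  assumes "distinct xs" "distinct ys" "set xs = set ys"
  shows "permutation (list_perm xs ys)"
  using list_perm_permutes[OF assms] permutes_imp_permutation by blast

lemma list_perm_Cons_same:
  assumes "x \<notin> set xs" "x \<notin> set ys" "length xs = length ys"
  shows "list_perm (x#xs) (x#ys) = list_perm xs ys"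
proof
  fix z show "list_perm (x#xs) (x#ys) z = list_perm xs ys z"
  proof (cases "z = x")
    case True
    then show ?thesis using list_perm_notin[of xs ys x] assms by (simp add: list_perm_def)
  qed (simp add: list_perm_def)
qed

lemma list_perm_map_transpose:
  assumes "distinct xs" "set xs = set ys" "length xs = length ys" "a \<in> set ys" "b \<in> set ys"
  shows "list_perm xs (map (transpose a b) ys) = transpose a b \<circ> list_perm xs ys"
proof
  fix z show "list_perm xs (map (transpose a b) ys) z = (transpose a b \<circ> list_perm xs ys) z"
  proof (cases "z \<in> set xs")
    case True
    then obtain k where k: "k < length xs" "z = xs ! k" by (metis in_set_conv_nth)
    then show ?thesis using list_perm_nth[OF assms(1), of "map (transpose a b) ys" k]
        list_perm_nth[OF assms(1) assms(3) k(1)] assms(3) by simp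
  next
    case False
    then show ?thesis using list_perm_notin[of xs _ z] assms by (auto simp: transpose_def)
  qed
qed

lemma sign_swap_step:
  assumes "distinct (ps @ as @ x # bs)" "distinct zs" "set zs = set (ps @ as @ x # bs)"
  shows "sign (list_perm zs (ps @ as @ x # bs)) = (-1)^length as * sign (list_perm zs (ps @ x # as @ bs))"
  using assms
proof (induction as arbitrary: bs rule: rev_induct)
  case Nil
  then show ?case by simp
next
  case (snoc a as bs)
  let ?ys = "ps @ as @ x # a # bs"
  have d: "distinct ?ys" using snoc.prems(1) by auto
  have ax: "a \<noteq> x" using snoc.prems(1) by auto
  have eq: "ps @ (as @ [a]) @ x # bs = map (transpose a x) ?ys"
  proof -
    have "map (transpose a x) ps = ps" using snoc.prems(1)
      by (intro map_idI) (auto simp: transpose_def)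
    moreover have "map (transpose a x) as = as" using snoc.prems(1)
      by (intro map_idI) (auto simp: transpose_def)
    moreover have "map (transpose a x) bs = bs" using snoc.prems(1)
      by (intro map_idI) (auto simp: transpose_def)
    ultimately show ?thesis by simp
  qed
  have s: "set zs = set ?ys" using snoc.prems(3) by auto
  have len: "length zs = length ?ys" using s d snoc.prems(2) distinct_card by metis
  have tr: "list_perm zs (map (transpose a x) ?ys) = transpose a x \<circ> list_perm zs ?ys"
    by (rule list_perm_map_transpose[OF snoc.prems(2) s len]) auto
  have "sign (list_perm zs (ps @ (as @ [a]) @ x # bs)) = sign (transpose a x \<circ> list_perm zs ?ys)"
    by (simp only: eq tr)
  also have "\<dots> = - sign (list_perm zs ?ys)"
    using sign_compose[OF permutation_swap_id list_perm_permutation[OF snoc.prems(2) d s]]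
      sign_swap_id[of a x] ax by simp
  also have "sign (list_perm zs ?ys) = (-1)^length as * sign (list_perm zs (ps @ x # as @ a # bs))"
    using snoc.IH[of "a # bs"] d snoc.prems(2) s by simp
  finally show ?case by simp
qed

lemma sign_list_perm:
  assumes "distinct xs" "distinct ys" "set xs = set ys"
  shows "sign (list_perm xs ys) = psign xs ys"
  using assms
proof (induction xs arbitrary: ys)
  case Nil
  then have "list_perm [] ys = id" by (auto simp: list_perm_def fun_eq_iff)
  then show ?case by simp
next
  case (Cons x xs ys)
  then have "x \<in> set ys" by auto
  then obtain as bs where ys: "ys = as @ x # bs" by (metis split_list)
  have xas: "x \<notin> set as" "x \<notin> set bs" using Cons.prems(2) ys by auto
  have xxs: "x \<notin> set xs" using Cons.prems(1) by simp
  have dab: "distinct (as @ bs)" using Cons.prems(2) ys by simp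
  have sab: "set xs = set (as @ bs)"
  proof -
    have "insert x (set xs) = insert x (set (as @ bs))" using Cons.prems(3) ys by auto
    then show ?thesis using xxs xas by (metis Un_iff insert_ident set_append)
  qed
  have len: "length xs = length (as @ bs)"
    using distinct_card[of xs] distinct_card[of "as @ bs"] sab dab Cons.prems(1) by simp
  have "sign (list_perm (x#xs) ys) = (-1)^length as * sign (list_perm (x#xs) (x # as @ bs))"
    using sign_swap_step[of "[]" as x bs "x#xs"] Cons.prems ys by simp
  also have "list_perm (x#xs) (x # as @ bs) = list_perm xs (as @ bs)"
    by (rule list_perm_Cons_same) (use xas xxs len in auto)
  also have "sign (list_perm xs (as @ bs)) = psign xs (as @ bs)"
    using Cons.IH[OF _ dab sab] Cons.prems(1) by simp
  finally show ?case using ys xas idx_append[of x as bs] by (simp add: remove1_append)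
qed

lemma psign_trans:
  assumes "distinct xs" "distinct ys" "distinct zs" "set xs = set ys" "set ys = set zs"
  shows "psign xs zs = psign xs ys * psign ys zs"
proof -
  have lx: "length xs = length ys" "length ys = length zs" using assms distinct_card by metis+
  have "list_perm xs zs = list_perm ys zs \<circ> list_perm xs ys"
  proof
    fix z show "list_perm xs zs z = (list_perm ys zs \<circ> list_perm xs ys) z"
    proof (cases "z \<in> set xs")
      case True
      then obtain k where k: "k < length xs" "z = xs ! k" by (metis in_set_conv_nth)
      then show ?thesis using list_perm_nth[OF assms(1)] list_perm_nth[OF assms(2)] lx by simp
    next
      case False
      then show ?thesis using list_perm_notin lx assms by (metis comp_apply)
    qed
  qed
  then have "sign (list_perm xs zs) = sign (list_perm ys zs) * sign (list_perm xs ys)"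
    using sign_compose[OF list_perm_permutation[of ys zs] list_perm_permutation[of xs ys]] assms by simp
  moreover have "sign (list_perm xs zs) = psign xs zs" by (rule sign_list_perm) (use assms in auto)
  moreover have "sign (list_perm ys zs) = psign ys zs" by (rule sign_list_perm) (use assms in auto)
  moreover have "sign (list_perm xs ys) = psign xs ys" by (rule sign_list_perm) (use assms in auto)
  ultimately show ?thesis by simp
qed

lemma psign_sym:
  assumes "distinct xs" "distinct ys" "set xs = set ys"
  shows "psign ys xs = psign xs ys"
proof -
  have "psign xs xs = psign xs ys * psign ys xs" by (rule psign_trans[OF assms(1,2,1,3) assms(3)[symmetric]])
  then have h: "psign xs ys * psign ys xs = 1" using psign_refl[of xs] by simp
  from psign_pm[of xs ys] show ?thesis
  proof
    assume "psign xs ys = 1" then show ?thesis using h by simp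
  next
    assume "psign xs ys = -1" then show ?thesis using h by simp
  qed
qed

lemma idx_remove1:
  assumes "distinct M" "a \<in> set M" "x \<in> set M" "a \<noteq> x"
  shows "idx (remove1 a M) x = (if idx M a < idx M x then idx M x - 1 else idx M x)
     \<and> idx M a \<noteq> idx M x"
  using assms by (induction M) auto

lemma psign_remove:
  assumes "distinct L" "distinct M" "set L = set M" "x \<in> set L"
  shows "psign L M = (-1)^(idx L x + idx M x) * psign (remove1 x L) (remove1 x M)"
  using assms
proof (induction L arbitrary: M)
  case Nil then show ?case by simp
next
  case (Cons a L1 M)
  show ?case
  proof (cases "a = x")
    case True then show ?thesis by simp
  next
    case False
    have x1: "x \<in> set L1" using Cons.prems False by auto
    have aM: "a \<in> set M" "x \<in> set M" using Cons.prems by auto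
    let ?M1 = "remove1 a M"
    have IH: "psign L1 ?M1 = (-1)^(idx L1 x + idx ?M1 x) * psign (remove1 x L1) (remove1 x ?M1)"
      using Cons.IH[of ?M1] Cons.prems x1 by (auto simp: set_remove1_eq)
    have r: "remove1 x (a # L1) = a # remove1 x L1" using False by simp
    have ia: "idx (remove1 x M) a = (if idx M x < idx M a then idx M a - 1 else idx M a)"
      using idx_remove1[of M x a] Cons.prems(2) aM False by auto
    have ix: "idx ?M1 x = (if idx M a < idx M x then idx M x - 1 else idx M x)" "idx M a \<noteq> idx M x"
      using idx_remove1[of M a x] Cons.prems(2) aM False by auto
    have p: "(-1::int)^(idx M a) * (-1)^(idx L1 x + idx ?M1 x) =
             (-1)^(Suc (idx L1 x) + idx M x) * (-1)^(idx (remove1 x M) a)"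
      using ia ix by (auto simp: minus_one_power_iff)
    have "psign (a # L1) M = (-1)^(idx M a) * psign L1 ?M1" by simp
    also have "\<dots> = (-1)^(idx M a) * (-1)^(idx L1 x + idx ?M1 x) * psign (remove1 x L1) (remove1 x ?M1)"
      using IH by simp
    also have "\<dots> = (-1)^(Suc (idx L1 x) + idx M x) * ((-1)^(idx (remove1 x M) a) * psign (remove1 x L1) (remove1 a (remove1 x M)))"
      using p by (simp add: remove1_commute[of x a])
    also have "(-1)^(idx (remove1 x M) a) * psign (remove1 x L1) (remove1 a (remove1 x M)) = psign (remove1 x (a # L1)) (remove1 x M)"
      using r by simp
    also have "Suc (idx L1 x) = idx (a # L1) x" using False by simp
    finally show ?thesis .
  qed
qed

lemma incidence_sign_psign:
  assumes dFb: "distinct (ori Fb)" "set (ori Fb) = Fb"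
    and dF: "distinct (ori F)" "set (ori F) = F"
    and Fb: "Fb = insert x F" "x \<notin> F"
  shows "incidence_sign ori F Fb = (-1)^(idx (ori Fb) x) * psign (remove1 x (ori Fb)) (ori F)"
proof -
  let ?L = "ori Fb"
  have xL: "x \<in> set ?L" using dFb Fb by auto
  note ix = idx_nth[OF xL]
  have the: "(THE j. j < length ?L \<and> ?L ! j \<notin> F) = idx ?L x"
  proof (rule the_equality)
    show "idx ?L x < length ?L \<and> ?L ! idx ?L x \<notin> F" using ix Fb by simp
    fix j assume j: "j < length ?L \<and> ?L ! j \<notin> F"
    then have "?L ! j = x" using dFb Fb nth_mem by blast
    then show "j = idx ?L x" using j ix dFb(1) nth_eq_iff_index_eq by metis
  qed
  have rem: "take (idx ?L x) ?L @ drop (Suc (idx ?L x)) ?L = remove1 x ?L"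
  proof -
    have "?L = take (idx ?L x) ?L @ x # drop (Suc (idx ?L x)) ?L"
      using id_take_nth_drop[of "idx ?L x" ?L] ix by simp
    moreover have "x \<notin> set (take (idx ?L x) ?L)"
    proof -
      have "take (idx ?L x) ?L = takeWhile (\<lambda>y. y \<noteq> x) ?L"
        unfolding idx_def by (rule takeWhile_eq_take[symmetric])
      then show ?thesis by (metis (full_types) set_takeWhileD)
    qed
    ultimately show ?thesis by (metis remove1_append remove1.simps(2))
  qed
  have s: "sign (list_perm (remove1 x ?L) (ori F)) = psign (remove1 x ?L) (ori F)"
    by (rule sign_list_perm) (use dFb dF Fb in auto)
  show ?thesis unfolding incidence_sign_def Let_def the rem s ..
qed

lemma idx_map: "inj f \<Longrightarrow> idx (map f ys) (f x) = idx ys x"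
  by (induction ys) (auto simp: inj_eq)

lemma remove1_map: "inj f \<Longrightarrow> remove1 (f x) (map f ys) = map f (remove1 x ys)"
  by (induction ys) (auto simp: inj_eq)

lemma psign_map: "inj f \<Longrightarrow> psign (map f xs) (map f ys) = psign xs ys"
  by (induction xs arbitrary: ys) (auto simp: idx_map remove1_map)

lemma incidence_edge:
  assumes f: "inj f"
    and oriX: "distinct (ori X)" "set (ori X) = X"
    and oriY: "distinct (ori Y)" "set (ori Y) = Y"
    and orjX: "distinct (orj (f ` X))" "set (orj (f ` X)) = f ` X"
    and orjY: "distinct (orj (f ` Y))" "set (orj (f ` Y)) = f ` Y"
    and Y: "Y = insert x X" "x \<notin> X"
  shows "incidence_sign orj (f ` X) (f ` Y) =
     psign (orj (f ` X)) (map f (ori X)) * psign (orj (f ` Y)) (map f (ori Y)) * incidence_sign ori X Y"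
proof -
  have fY: "f ` Y = insert (f x) (f ` X)" "f x \<notin> f ` X"
    using Y f by (auto simp: inj_def)
  define A where "A = orj (f ` Y)"
  define B where "B = ori Y"
  define B' where "B' = map f (ori Y)"
  define C' where "C' = map f (ori X)"
  define D where "D = orj (f ` X)"
  have dB': "distinct B'" "set B' = f ` Y" unfolding B'_def using oriY f
    by (simp_all add: distinct_map inj_on_def inj_def)
  have dC': "distinct C'" "set C' = f ` X" unfolding C'_def using oriX f
    by (simp_all add: distinct_map inj_on_def inj_def)
  have dA: "distinct A" "set A = f ` Y" unfolding A_def using orjY by auto
  have dD: "distinct D" "set D = f ` X" unfolding D_def using orjX by auto
  have I1: "incidence_sign orj (f ` X) (f ` Y) = (-1)^(idx A (f x)) * psign (remove1 (f x) A) D"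
    unfolding A_def D_def by (rule incidence_sign_psign[OF orjY orjX fY])
  have I2: "incidence_sign ori X Y = (-1)^(idx B x) * psign (remove1 x B) (ori X)"
    unfolding B_def by (rule incidence_sign_psign[OF oriY oriX Y])
  have sr: "set (remove1 (f x) A) = f ` X" "set (remove1 (f x) B') = f ` X"
    using dA dB' fY by (simp_all add: set_remove1_eq)
  have dr: "distinct (remove1 (f x) A)" "distinct (remove1 (f x) B')"
    using dA dB' by simp_all
  have t1: "psign (remove1 (f x) A) D = psign (remove1 (f x) A) (remove1 (f x) B') * psign (remove1 (f x) B') D"
    by (rule psign_trans) (use dr dD sr in simp_all)
  have t2: "psign (remove1 (f x) B') D = psign (remove1 (f x) B') C' * psign C' D"
    by (rule psign_trans) (use dr dD dC' sr in simp_all)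
  have P2: "psign A B' = (-1)^(idx A (f x) + idx B' (f x)) * psign (remove1 (f x) A) (remove1 (f x) B')"
    by (rule psign_remove) (use dA dB' fY in simp_all)
  have sq: "\<And>n. (-1::int)^n * (-1)^n = 1"
    by (simp add: power_add[symmetric] minus_one_power_iff)
  have P2': "psign (remove1 (f x) A) (remove1 (f x) B') = (-1)^(idx A (f x) + idx B' (f x)) * psign A B'"
    using P2 sq by (metis mult.assoc mult_1)
  have iB: "idx B' (f x) = idx B x" unfolding B'_def B_def using idx_map[OF f] by simp
  have rB: "remove1 (f x) B' = map f (remove1 x B)" unfolding B'_def B_def using remove1_map[OF f] by simp
  have s1: "psign (remove1 (f x) B') C' = psign (remove1 x B) (ori X)"
    unfolding rB C'_def using psign_map[OF f] by simp
  have s2: "psign C' D = psign D C'" using psign_sym[OF dD(1) dC'(1)] dD(2) dC'(2) by simp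
  have "incidence_sign orj (f ` X) (f ` Y) =
     ((-1)^(idx A (f x)) * (-1)^(idx A (f x))) * ((-1)^(idx B x) * psign (remove1 x B) (ori X)) * psign A B' * psign D C'"
    unfolding I1 t1 t2 P2' s1 s2 iB power_add by (simp only: mult_ac)
  also have "\<dots> = psign D C' * psign A B' * incidence_sign ori X Y"
    unfolding sq I2 by (simp only: mult_ac mult_1)
  finally show ?thesis unfolding D_def C'_def A_def B'_def .
qed

lemma sign_pm: "sign p = 1 \<or> sign p = -1"
  by (simp add: sign_def)

lemma incidence_sign_pm: "incidence_sign ori X Y = 1 \<or> incidence_sign ori X Y = -1"
  by (auto simp: incidence_sign_def Let_def minus_one_power_iff sign_def)

lemma B_sign_pm: "B_sign ori X Y = 1 \<or> B_sign ori X Y = -1"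
  by (simp add: B_sign_def incidence_sign_pm)

lemma B_adj_sym: "B_adj K i X Y \<Longrightarrow> B_adj K i Y X"
  by (auto simp: B_adj_def)

lemma B_adj_irr: "\<not> B_adj K i X X"
  by (auto simp: B_adj_def faces_of_dim_def)

lemma B_adj_verts: "B_adj K i X Y \<Longrightarrow> X \<in> B_verts K i \<and> Y \<in> B_verts K i"
  by (auto simp: B_adj_def B_verts_def)

lemma B_adj_finite: "B_adj K i X Y \<Longrightarrow> finite X \<and> finite Y"
  by (auto simp: B_adj_def faces_of_dim_def intro: card_ge_0_finite)

lemma B_sign_sym: "B_adj K i X Y \<Longrightarrow> B_sign ori X Y = B_sign ori Y X"
proof -
  assume a: "B_adj K i X Y"
  have ne: "X \<noteq> Y" using a B_adj_irr[of K i X] by auto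
  have "X \<subseteq> Y \<or> Y \<subseteq> X" using a by (auto simp: B_adj_def)
  then show ?thesis
  proof
    assume "X \<subseteq> Y" then have "\<not> Y \<subseteq> X" using ne by auto
    then show ?thesis using \<open>X \<subseteq> Y\<close> by (simp add: B_sign_def)
  next
    assume "Y \<subseteq> X" then have "\<not> X \<subseteq> Y" using ne by auto
    then show ?thesis using \<open>Y \<subseteq> X\<close> by (simp add: B_sign_def)
  qed
qed

lemma orient_single: "distinct xs \<Longrightarrow> set xs = {a} \<Longrightarrow> xs = [a]"
  by (metis distinct.simps(2) distinct_singleton empty_iff insert_iff list.exhaust list.set(1)
      list.set_intros(1) list.set_intros(2) set_ConsD)

lemma orient_pair: "distinct xs \<Longrightarrow> set xs = {a,b} \<Longrightarrow> a \<noteq> b \<Longrightarrow> xs = [a,b] \<or> xs = [b,a]"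
proof -
  assume d: "distinct xs" and s: "set xs = {a,b}" and ab: "a \<noteq> b"
  have "length xs = card {a,b}" using distinct_card[OF d] s by simp
  then have "length xs = 2" using ab by simp
  then obtain p q where pq: "xs = [p,q]"
    by (metis One_nat_def Suc_1 length_0_conv length_Suc_conv)
  then have "{p,q} = {a,b}" using s by simp
  then show ?thesis using pq by (auto simp: doubleton_eq_iff)
qed

lemma pair_sign:
  assumes "distinct (ori {a})" "set (ori {a}) = {a}" "distinct (ori {b})" "set (ori {b}) = {b}"
    "distinct (ori {a,b})" "set (ori {a,b}) = {a,b}" "a \<noteq> b"
  shows "B_sign ori {a} {a,b} * B_sign ori {b} {a,b} = -1"
proof -
  have oa: "ori {a} = [a]" "ori {b} = [b]" using orient_single assms(1-4) by metis+
  have ab1: "{a,b} = insert b {a}" "b \<notin> {a}" using assms(7) by auto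
  have ab2: "{a,b} = insert a {b}" "a \<notin> {b}" using assms(7) by auto
  have e1: "B_sign ori {a} {a,b} = (-1)^(idx (ori {a,b}) b) * psign (remove1 b (ori {a,b})) [a]"
    using incidence_sign_psign[OF assms(5,6) assms(1,2) ab1] oa by (simp add: B_sign_def)
  have e2: "B_sign ori {b} {a,b} = (-1)^(idx (ori {a,b}) a) * psign (remove1 a (ori {a,b})) [b]"
    using incidence_sign_psign[OF assms(5,6) assms(3,4) ab2] oa by (simp add: B_sign_def)
  from orient_pair[OF assms(5,6,7)] show ?thesis
  proof
    assume h: "ori {a,b} = [a,b]" show ?thesis unfolding e1 e2 h using assms(7) by simp
  next
    assume h: "ori {a,b} = [b,a]" show ?thesis unfolding e1 e2 h using assms(7) by simp
  qed
qed

fun wprod :: "('x \<Rightarrow> 'x \<Rightarrow> int) \<Rightarrow> 'x list \<Rightarrow> int" where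
  "wprod s (x # y # r) = s x y * wprod s (y # r)"
| "wprod s _ = 1"

fun iswalk :: "('x \<Rightarrow> 'x \<Rightarrow> bool) \<Rightarrow> 'x list \<Rightarrow> bool" where
  "iswalk A (x # y # r) = (A x y \<and> iswalk A (y # r))"
| "iswalk A _ = True"

lemma wprod_append:
  "xs \<noteq> [] \<Longrightarrow> ys \<noteq> [] \<Longrightarrow> wprod s (xs @ ys) = wprod s xs * s (last xs) (hd ys) * wprod s ys"
proof (induction xs)
  case Nil then show ?case by simp
next
  case (Cons x xs)
  show ?case
  proof (cases xs)
    case Nil then show ?thesis using Cons.prems by (cases ys) auto
  next
    case (Cons y r)
    then show ?thesis using Cons.IH \<open>xs = y # r\<close> Cons.prems by (simp add: mult.assoc)
  qed
qed

lemma iswalk_append: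
  "xs \<noteq> [] \<Longrightarrow> ys \<noteq> [] \<Longrightarrow> iswalk A (xs @ ys) \<longleftrightarrow> iswalk A xs \<and> A (last xs) (hd ys) \<and> iswalk A ys"
proof (induction xs)
  case Nil then show ?case by simp
next
  case (Cons x xs)
  show ?case
  proof (cases xs)
    case Nil then show ?thesis using Cons.prems by (cases ys) auto
  next
    case (Cons y r)
    then show ?thesis using Cons.IH \<open>xs = y # r\<close> Cons.prems by auto
  qed
qed

lemma wprod_pm: "(\<forall>x y. s x y = 1 \<or> s x y = -1) \<Longrightarrow> wprod s w = 1 \<or> wprod s w = -1"
proof (induction w rule: induct_list012)
  case (3 x y zs)
  then have "wprod s (y # zs) = 1 \<or> wprod s (y # zs) = -1" by blast
  moreover have "s x y = 1 \<or> s x y = -1" using 3 by blast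
  ultimately show ?case by auto
qed auto

lemma iswalk_rev: "(\<forall>x y. A x y \<longrightarrow> A y x) \<Longrightarrow> iswalk A w \<Longrightarrow> iswalk A (rev w)"
proof (induction w)
  case Nil then show ?case by simp
next
  case (Cons x w)
  show ?case
  proof (cases w)
    case Nil then show ?thesis by simp
  next
    case (Cons y r)
    have "iswalk A (rev w)" using Cons.IH Cons.prems \<open>w = y # r\<close> by simp
    then show ?thesis using iswalk_append[of "rev w" "[x]" A] Cons.prems \<open>w = y # r\<close>
      by (simp add: last_rev)
  qed
qed

lemma wprod_rev: "(\<forall>x y. A x y \<longrightarrow> s x y = s y x) \<Longrightarrow> iswalk A w \<Longrightarrow> wprod s (rev w) = wprod s w"
proof (induction w)
  case Nil then show ?case by simp
next
  case (Cons x w)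
  show ?case
  proof (cases w)
    case Nil then show ?thesis by simp
  next
    case (Cons y r)
    have "wprod s (rev w) = wprod s w" using Cons.IH Cons.prems \<open>w = y # r\<close> by simp
    moreover have "A x y" using Cons.prems \<open>w = y # r\<close> by simp
    then have "s y x = s x y" using Cons.prems(1) by metis
    ultimately show ?thesis using wprod_append[of "rev w" "[x]" s] \<open>w = y # r\<close>
      by (simp add: last_rev)
  qed
qed

lemma wprod_nth: "wprod s xs = (\<Prod>k<length xs - 1. s (xs ! k) (xs ! Suc k))"
proof (induction s xs rule: wprod.induct)
  case (1 s x y r)
  then show ?case by (simp add: prod.lessThan_Suc_shift del: prod.lessThan_Suc)
qed auto

lemma iswalk_nth: "iswalk A xs \<longleftrightarrow> (\<forall>k. Suc k < length xs \<longrightarrow> A (xs ! k) (xs ! Suc k))"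
proof (induction A xs rule: iswalk.induct)
  case (1 A x y r)
  show ?case
  proof
    assume "iswalk A (x # y # r)"
    then show "\<forall>k. Suc k < length (x # y # r) \<longrightarrow> A ((x # y # r) ! k) ((x # y # r) ! Suc k)"
      using 1 by (auto simp: less_Suc_eq_0_disj)
  next
    assume h: "\<forall>k. Suc k < length (x # y # r) \<longrightarrow> A ((x # y # r) ! k) ((x # y # r) ! Suc k)"
    have "A x y" using h[rule_format, of 0] by simp
    moreover have "\<forall>k. Suc k < length (y # r) \<longrightarrow> A ((y # r) ! k) ((y # r) ! Suc k)"
      using h by (metis Suc_less_eq length_Cons nth_Cons_Suc)
    ultimately show "iswalk A (x # y # r)" using 1 by simp
  qed
qed auto

lemma cyc_nth:
  assumes "cs \<noteq> []" "k < length cs"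
  shows "(cs @ [hd cs]) ! k = cs ! k" "(cs @ [hd cs]) ! Suc k = cs ! ((k + 1) mod length cs)"
proof -
  show "(cs @ [hd cs]) ! k = cs ! k" using assms by (simp add: nth_append)
  show "(cs @ [hd cs]) ! Suc k = cs ! ((k + 1) mod length cs)"
  proof (cases "Suc k < length cs")
    case True then show ?thesis by (simp add: nth_append)
  next
    case False then have "Suc k = length cs" using assms by simp
    then show ?thesis using assms by (simp add: nth_append hd_conv_nth)
  qed
qed

lemma wprod_cyc:
  assumes "cs \<noteq> []"
  shows "(\<Prod>k<length cs. s (cs ! k) (cs ! ((k + 1) mod length cs))) = wprod s (cs @ [hd cs])"
  unfolding wprod_nth using cyc_nth[OF assms] by (intro prod.cong) auto

lemma iswalk_cyc:
  assumes "cs \<noteq> []"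
  shows "iswalk A (cs @ [hd cs]) \<longleftrightarrow> (\<forall>k<length cs. A (cs ! k) (cs ! ((k + 1) mod length cs)))"
  unfolding iswalk_nth using cyc_nth[OF assms] by auto

lemma closed_walk:
  assumes sym: "\<forall>x y. A x y \<longrightarrow> A y x" and irr: "\<forall>x. \<not> A x x"
    and ssym: "\<forall>x y. A x y \<longrightarrow> s x y = s y x" and pm: "\<forall>x y. s x y = 1 \<or> s x y = -1"
    and inV: "\<forall>x y. A x y \<longrightarrow> x \<in> V"
    and cyc: "\<forall>cs. 3 \<le> length cs \<and> distinct cs \<and> set cs \<subseteq> V \<and>
        (\<forall>k<length cs. A (cs ! k) (cs ! ((k + 1) mod length cs))) \<longrightarrow>
        (\<Prod>k<length cs. s (cs ! k) (cs ! ((k + 1) mod length cs))) = 1"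
  shows "iswalk A w \<Longrightarrow> w \<noteq> [] \<Longrightarrow> hd w = last w \<Longrightarrow> wprod s w = 1"
proof (induction "length w" arbitrary: w rule: less_induct)
  case less
  show ?case
  proof (cases "length w = 1")
    case True
    then obtain x where "w = [x]" by (metis One_nat_def length_0_conv length_Suc_conv)
    then show ?thesis by simp
  next
    case False
    define cs where "cs = butlast w"
    have w: "w = cs @ [hd cs]" and csne: "cs \<noteq> []"
    proof -
      have "length w \<ge> 2" using False less.prems(2) by (cases w) (auto simp: Suc_le_eq)
      then show csne: "cs \<noteq> []" unfolding cs_def by (cases w) auto
      have "w = cs @ [last w]" unfolding cs_def using less.prems(2) by simp
      moreover have "hd cs = hd w" unfolding cs_def using csne cs_def
        by (metis append_butlast_last_id hd_append2 less.prems(2))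
      ultimately show "w = cs @ [hd cs]" using less.prems(3) by simp
    qed
    show ?thesis
    proof (cases "distinct cs")
      case True
      have wk: "\<forall>k<length cs. A (cs ! k) (cs ! ((k + 1) mod length cs))"
        using iswalk_cyc[OF csne, of A] less.prems(1) w by simp
      show ?thesis
      proof (cases "length cs \<ge> 3")
        case True
        have "set cs \<subseteq> V"
        proof
          fix z assume "z \<in> set cs"
          then obtain k where "k < length cs" "z = cs ! k" by (metis in_set_conv_nth)
          then show "z \<in> V" using wk inV by blast
        qed
        then have "(\<Prod>k<length cs. s (cs ! k) (cs ! ((k + 1) mod length cs))) = 1"
          using cyc True \<open>distinct cs\<close> wk by blast
        then show ?thesis using wprod_cyc[OF csne, of s] w by simp
      next
        case False
        moreover have "length cs > 0" using csne by simp
        ultimately have "length cs = 1 \<or> length cs = 2" by linarith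
        then show ?thesis
        proof
          assume "length cs = 1"
          then obtain x where "cs = [x]" by (metis One_nat_def length_0_conv length_Suc_conv)
          then show ?thesis using less.prems(1) w irr by simp
        next
          assume "length cs = 2"
          then obtain x y where xy: "cs = [x, y]"
            by (metis One_nat_def Suc_1 length_0_conv length_Suc_conv)
          then have "A x y" using less.prems(1) w by simp
          then have "s y x = s x y" using ssym by metis
          moreover have "s x y * s x y = 1" using pm[rule_format, of x y] by auto
          ultimately show ?thesis using w xy by simp
        qed
      qed
    next
      case False
      then obtain xs ys zs y where cs: "cs = xs @ [y] @ ys @ [y] @ zs"
        using not_distinct_decomp by blast
      define x where "x = hd cs"
      define P where "P = xs @ [y]"
      define Q where "Q = ys @ [y]"
      define R where "R = zs @ [x]"
      have wPQR: "w = P @ Q @ R" using w cs unfolding P_def Q_def R_def x_def by simp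
      have ne: "P \<noteq> []" "Q \<noteq> []" "R \<noteq> []" unfolding P_def Q_def R_def by simp_all
      have lP: "last P = y" "last Q = y" unfolding P_def Q_def by simp_all
      have wk: "iswalk A P" "A y (hd Q)" "iswalk A Q" "A y (hd R)" "iswalk A R"
        using less.prems(1) iswalk_append[of P "Q @ R" A] iswalk_append[of Q R A] ne lP
        unfolding wPQR by auto
      have wp: "wprod s w = wprod s P * s y (hd Q) * wprod s Q * s y (hd R) * wprod s R"
        using wprod_append[of P "Q @ R" s] wprod_append[of Q R s] ne lP unfolding wPQR
        by (simp add: mult.assoc)
      define w1 where "w1 = P @ R"
      define w2 where "w2 = y # Q"
      have hw1: "hd w1 = hd w" unfolding w1_def wPQR using ne by simp
      have lw1: "last w1 = last w" unfolding w1_def wPQR using ne by simp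
      have "iswalk A w1" unfolding w1_def using iswalk_append[of P R A] ne lP wk by simp
      moreover have "length w1 < length w" unfolding w1_def wPQR using ne by simp
      ultimately have 1: "wprod s w1 = 1" using less.hyps[of w1] hw1 lw1 less.prems ne
        unfolding w1_def by simp
      have "iswalk A w2" unfolding w2_def using wk ne by (cases Q) auto
      moreover have "length w2 < length w" unfolding w2_def wPQR P_def using ne by simp
      moreover have "hd w2 = last w2" unfolding w2_def Q_def by simp
      ultimately have 2: "wprod s w2 = 1" using less.hyps[of w2] unfolding w2_def by simp
      have e1: "wprod s w1 = wprod s P * s y (hd R) * wprod s R"
        unfolding w1_def using wprod_append[of P R s] ne lP by simp
      have e2: "wprod s w2 = s y (hd Q) * wprod s Q"
        unfolding w2_def using ne by (cases Q) auto
      have "wprod s w = wprod s w1 * wprod s w2" unfolding wp e1 e2 by (simp only: mult_ac)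
      then show ?thesis using 1 2 by simp
    qed
  qed
qed

lemma potential_exists:
  assumes sym: "\<forall>x y. A x y \<longrightarrow> A y x"
    and ssym: "\<forall>x y. A x y \<longrightarrow> s x y = s y x" and pm: "\<forall>x y. s x y = 1 \<or> s x y = -1"
    and inV: "\<forall>x y. A x y \<longrightarrow> x \<in> V \<and> y \<in> V"
    and conn: "\<forall>x\<in>V. \<exists>w. w \<noteq> [] \<and> hd w = r0 \<and> last w = x \<and> iswalk A w"
    and cw: "\<And>w. iswalk A w \<Longrightarrow> w \<noteq> [] \<Longrightarrow> hd w = last w \<Longrightarrow> wprod s w = 1"
  shows "\<exists>\<phi>. (\<forall>x. \<phi> x = (1::int) \<or> \<phi> x = -1) \<and> (\<forall>x y. A x y \<longrightarrow> s x y = \<phi> x * \<phi> y)"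
proof -
  define W where "W x = (SOME w. w \<noteq> [] \<and> hd w = r0 \<and> last w = x \<and> iswalk A w)" for x
  define \<phi> where "\<phi> x = wprod s (W x)" for x
  have W: "W x \<noteq> [] \<and> hd (W x) = r0 \<and> last (W x) = x \<and> iswalk A (W x)" if "x \<in> V" for x
    unfolding W_def by (rule someI_ex) (use conn that in blast)
  have p1: "\<forall>x. \<phi> x = 1 \<or> \<phi> x = -1" unfolding \<phi>_def using wprod_pm[of s] pm by blast
  have "s x y = \<phi> x * \<phi> y" if a: "A x y" for x y
  proof -
    have V: "x \<in> V" "y \<in> V" using inV a by auto
    note Wx = W[OF V(1)] and Wy = W[OF V(2)]
    have rv: "rev (W y) \<noteq> []" "hd (rev (W y)) = y" "last (rev (W y)) = r0" "iswalk A (rev (W y))"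
      using Wy iswalk_rev[OF sym] by (auto simp: hd_rev last_rev)
    have "iswalk A (W x @ rev (W y))" using iswalk_append[of "W x" "rev (W y)" A] Wx rv a by simp
    moreover have "hd (W x @ rev (W y)) = last (W x @ rev (W y))" using Wx rv by simp
    ultimately have "wprod s (W x @ rev (W y)) = 1" using cw Wx by simp
    moreover have "wprod s (W x @ rev (W y)) = \<phi> x * s x y * \<phi> y"
    proof -
      have "wprod s (rev (W y)) = wprod s (W y)" using wprod_rev[OF ssym] Wy by blast
      then show ?thesis using wprod_append[of "W x" "rev (W y)" s] Wx rv unfolding \<phi>_def by simp
    qed
    ultimately have "\<phi> x * s x y * \<phi> y = 1" by simp
    then have h: "\<phi> x * s x y * \<phi> y = 1" .
    have sq: "\<phi> x * \<phi> x = 1" "\<phi> y * \<phi> y = 1" using p1[rule_format, of x] p1[rule_format, of y] by auto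
    have "s x y = s x y * (\<phi> x * \<phi> x) * (\<phi> y * \<phi> y)" using sq by simp
    also have "\<dots> = (\<phi> x * s x y * \<phi> y) * (\<phi> x * \<phi> y)" by (simp only: mult_ac)
    finally show ?thesis using h by simp
  qed
  then show ?thesis using p1 by blast
qed

lemma prod_rot:
  fixes g :: "nat \<Rightarrow> int"
  shows "(\<Prod>k<n. g ((k + 1) mod n)) = (\<Prod>k<n. g k)"
proof (cases n)
  case 0 then show ?thesis by simp
next
  case (Suc m)
  have "(\<Prod>k<Suc m. g ((k + 1) mod Suc m)) = (\<Prod>k<m. g ((k + 1) mod Suc m)) * g 0"
    by simp
  also have "(\<Prod>k<m. g ((k + 1) mod Suc m)) = (\<Prod>k<m. g (Suc k))"
    by (intro prod.cong) auto
  also have "(\<Prod>k<m. g (Suc k)) * g 0 = (\<Prod>k<Suc m. g k)"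
    by (simp add: prod.lessThan_Suc_shift del: prod.lessThan_Suc)
  finally show ?thesis using Suc by simp
qed

lemma prod_pm: fixes n :: nat shows "(\<forall>k<n. e k = (1::int) \<or> e k = -1) \<Longrightarrow> (\<Prod>k<n. e k) = 1 \<or> (\<Prod>k<n. e k) = -1"
  by (induction n) auto

lemma prod_cyc_cancel:
  fixes e s :: "nat \<Rightarrow> int"
  assumes "\<forall>k<n. e k = 1 \<or> e k = -1"
  shows "(\<Prod>k<n. e k * e ((k + 1) mod n) * s k) = (\<Prod>k<n. s k)"
proof -
  have "(\<Prod>k<n. e k * e ((k + 1) mod n) * s k) = (\<Prod>k<n. e k) * (\<Prod>k<n. e ((k + 1) mod n)) * (\<Prod>k<n. s k)"
    by (simp add: prod.distrib)
  also have "(\<Prod>k<n. e ((k + 1) mod n)) = (\<Prod>k<n. e k)" by (rule prod_rot)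
  also have "(\<Prod>k<n. e k) * (\<Prod>k<n. e k) = 1" using prod_pm[OF assms] by auto
  finally show ?thesis by simp
qed

lemma potential_B:
  assumes conn: "B_connected K i" and bal: "B_balanced K i ori"
  shows "\<exists>\<phi>. (\<forall>X. \<phi> X = (1::int) \<or> \<phi> X = -1) \<and> (\<forall>X Y. B_adj K i X Y \<longrightarrow> B_sign ori X Y = \<phi> X * \<phi> Y)"
proof -
  obtain r0 where r0: "r0 \<in> B_verts K i" using conn unfolding B_connected_def by blast
  have sym: "\<forall>x y. B_adj K i x y \<longrightarrow> B_adj K i y x" using B_adj_sym by blast
  have ssym: "\<forall>x y. B_adj K i x y \<longrightarrow> B_sign ori x y = B_sign ori y x" using B_sign_sym by blast
  have pm: "\<forall>x y. B_sign ori x y = 1 \<or> B_sign ori x y = -1" using B_sign_pm by blast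
  have inV: "\<forall>x y. B_adj K i x y \<longrightarrow> x \<in> B_verts K i \<and> y \<in> B_verts K i" using B_adj_verts by blast
  have cn: "\<forall>x\<in>B_verts K i. \<exists>w. w \<noteq> [] \<and> hd w = r0 \<and> last w = x \<and> iswalk (B_adj K i) w"
    using conn r0 unfolding B_connected_def iswalk_nth by blast
  have cyc: "\<forall>cs. 3 \<le> length cs \<and> distinct cs \<and> set cs \<subseteq> B_verts K i \<and>
        (\<forall>k<length cs. B_adj K i (cs ! k) (cs ! ((k + 1) mod length cs))) \<longrightarrow>
        (\<Prod>k<length cs. B_sign ori (cs ! k) (cs ! ((k + 1) mod length cs))) = 1"
    using bal unfolding B_balanced_def B_cycle_def by blast
  have cw: "\<And>w. iswalk (B_adj K i) w \<Longrightarrow> w \<noteq> [] \<Longrightarrow> hd w = last w \<Longrightarrow> wprod (B_sign ori) w = 1"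
    using closed_walk[OF sym _ ssym pm _ cyc] B_adj_irr inV by blast
  show ?thesis using potential_exists[OF sym ssym pm inV cn cw] .
qed

lemma balanced_from_potential:
  assumes pm: "\<forall>X. \<phi> X = (1::int) \<or> \<phi> X = -1"
    and pot: "\<forall>X Y. B_adj K i X Y \<longrightarrow> B_sign ori X Y = \<phi> X * \<phi> Y"
  shows "B_balanced K i ori"
  unfolding B_balanced_def
proof (intro allI impI)
  fix cs assume c: "B_cycle K i cs"
  let ?n = "length cs"
  have "(\<Prod>k<?n. B_sign ori (cs ! k) (cs ! ((k + 1) mod ?n))) =
        (\<Prod>k<?n. \<phi> (cs ! k) * \<phi> (cs ! ((k + 1) mod ?n)) * 1)"
    using c pot unfolding B_cycle_def by (intro prod.cong) auto
  also have "\<dots> = (\<Prod>k<?n. (1::int))"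
    by (rule prod_cyc_cancel[of ?n "\<lambda>k. \<phi> (cs ! k)" "\<lambda>k. 1"]) (use pm in blast)
  finally show "(\<Prod>k<?n. B_sign ori (cs ! k) (cs ! ((k + 1) mod ?n))) = 1" by simp
qed

lemma orientationD: "orientation K ori \<Longrightarrow> X \<in> K \<Longrightarrow> distinct (ori X) \<and> set (ori X) = X"
  by (simp add: orientation_def)

lemma insert_of_card:
  assumes "X \<subseteq> Y" "finite Y" "card Y = card X + 1"
  obtains x where "Y = insert x X" "x \<notin> X"
proof -
  have "card (Y - X) = 1" using assms card_Diff_subset[of X Y] finite_subset[of X Y] by simp
  then obtain x where "Y - X = {x}" by (metis card_1_singletonE)
  then show ?thesis using that assms(1) by blast
qed

lemma B_edge:
  assumes f: "inj f" and o1: "orientation Kc ori" and o2: "orientation K orj"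
    and emb: "\<forall>Z\<in>Kc. f ` Z \<in> K" and adj: "B_adj Kc i X Y"
  shows "B_sign orj (f ` X) (f ` Y) =
    psign (orj (f ` X)) (map f (ori X)) * psign (orj (f ` Y)) (map f (ori Y)) * B_sign ori X Y"
proof -
  have gen: "B_sign orj (f ` X) (f ` Y) = psign (orj (f ` X)) (map f (ori X)) * psign (orj (f ` Y)) (map f (ori Y)) * B_sign ori X Y"
    if a: "X \<in> faces_of_dim Kc i" "Y \<in> faces_of_dim Kc (i + 1)" "X \<subseteq> Y" for X Y
  proof -
    have XY: "X \<in> Kc" "Y \<in> Kc" "card X = i + 1" "card Y = i + 2" using a by (auto simp: faces_of_dim_def)
    have oX: "distinct (ori X)" "set (ori X) = X" using orientationD[OF o1 XY(1)] by auto
    have oY: "distinct (ori Y)" "set (ori Y) = Y" using orientationD[OF o1 XY(2)] by auto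
    have jX: "distinct (orj (f ` X))" "set (orj (f ` X)) = f ` X" using orientationD[OF o2] emb XY by auto
    have jY: "distinct (orj (f ` Y))" "set (orj (f ` Y)) = f ` Y" using orientationD[OF o2] emb XY by auto
    have fin: "finite Y" using oY(2) by (metis List.finite_set)
    obtain x where x: "Y = insert x X" "x \<notin> X" using insert_of_card[OF a(3) fin] XY by auto
    have s1: "f ` X \<subseteq> f ` Y" using a(3) by auto
    show ?thesis using incidence_edge[OF f oX oY jX jY x] s1 a(3) by (simp add: B_sign_def)
  qed
  from adj show ?thesis unfolding B_adj_def
  proof
    assume "X \<in> faces_of_dim Kc i \<and> Y \<in> faces_of_dim Kc (i + 1) \<and> X \<subseteq> Y"
    then show ?thesis using gen by blast
  next
    assume a: "Y \<in> faces_of_dim Kc i \<and> X \<in> faces_of_dim Kc (i + 1) \<and> Y \<subseteq> X"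
    have ne: "X \<noteq> Y" using adj B_adj_irr by metis
    then have n1: "\<not> X \<subseteq> Y" using a by auto
    then have n2: "\<not> f ` X \<subseteq> f ` Y" using f by (simp add: inj_image_subset_iff)
    have "B_sign orj (f ` Y) (f ` X) = psign (orj (f ` Y)) (map f (ori Y)) * psign (orj (f ` X)) (map f (ori X)) * B_sign ori Y X"
      using gen a by blast
    have s3: "f ` Y \<subseteq> f ` X" using a by auto
    then show ?thesis using n1 n2 a \<open>B_sign orj (f ` Y) (f ` X) = _\<close> by (simp add: B_sign_def mult_ac)
  qed
qed

lemma B_adj_emb:
  assumes f: "inj f" and emb: "\<forall>Z\<in>Kc. f ` Z \<in> K" and adj: "B_adj Kc i X Y"
  shows "B_adj K i (f ` X) (f ` Y)"
proof -
  have c: "\<And>Z. card (f ` Z) = card Z" using f by (simp add: card_image inj_on_subset)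
  show ?thesis using adj emb c unfolding B_adj_def faces_of_dim_def by (auto simp: image_mono)
qed

lemma cycle_emb:
  assumes f: "inj f" and o1: "orientation Kc ori" and o2: "orientation K orj"
    and emb: "\<forall>Z\<in>Kc. f ` Z \<in> K" and c: "B_cycle Kc i ds"
  shows "B_cycle K i (map ((`) f) ds) \<and>
    (\<Prod>k<length ds. B_sign orj (map ((`) f) ds ! k) (map ((`) f) ds ! ((k + 1) mod length ds))) =
    (\<Prod>k<length ds. B_sign ori (ds ! k) (ds ! ((k + 1) mod length ds)))"
proof
  let ?n = "length ds"
  have adj: "\<forall>k<?n. B_adj Kc i (ds ! k) (ds ! ((k + 1) mod ?n))" using c by (simp add: B_cycle_def)
  have n0: "?n > 0" using c unfolding B_cycle_def by linarith
  have c': "\<And>Z. card (f ` Z) = card Z" using f by (simp add: card_image inj_on_subset)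
  have "inj_on ((`) f) (set ds)" using f by (simp add: inj_on_def inj_image_eq_iff)
  then have "distinct (map ((`) f) ds)" using c
    by (simp add: B_cycle_def distinct_map)
  moreover have "set (map ((`) f) ds) \<subseteq> B_verts K i"
  proof
    fix Z assume "Z \<in> set (map ((`) f) ds)"
    then obtain X where X: "X \<in> set ds" "Z = f ` X" by auto
    then have "X \<in> B_verts Kc i" using c by (auto simp: B_cycle_def)
    then show "Z \<in> B_verts K i" using X emb c' unfolding B_verts_def faces_of_dim_def by auto
  qed
  moreover have "\<forall>k<?n. B_adj K i (map ((`) f) ds ! k) (map ((`) f) ds ! ((k + 1) mod ?n))"
  proof (intro allI impI)
    fix k assume k: "k < ?n"
    then have k2: "(k + 1) mod ?n < ?n" using n0 by simp
    show "B_adj K i (map ((`) f) ds ! k) (map ((`) f) ds ! ((k + 1) mod ?n))"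
      using B_adj_emb[OF f emb adj[rule_format, OF k]] k k2 by simp
  qed
  ultimately show "B_cycle K i (map ((`) f) ds)" using c by (simp add: B_cycle_def)
  define e where "e k = psign (orj (f ` (ds ! k))) (map f (ori (ds ! k)))" for k
  have "(\<Prod>k<?n. B_sign orj (map ((`) f) ds ! k) (map ((`) f) ds ! ((k + 1) mod ?n))) =
        (\<Prod>k<?n. e k * e ((k + 1) mod ?n) * B_sign ori (ds ! k) (ds ! ((k + 1) mod ?n)))"
  proof (rule prod.cong)
    fix k assume "k \<in> {..<?n}"
    then have k: "k < ?n" "(k + 1) mod ?n < ?n" using n0 by auto
    show "B_sign orj (map ((`) f) ds ! k) (map ((`) f) ds ! ((k + 1) mod ?n)) =
        e k * e ((k + 1) mod ?n) * B_sign ori (ds ! k) (ds ! ((k + 1) mod ?n))"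
      using B_edge[OF f o1 o2 emb adj[rule_format, OF k(1)]] k unfolding e_def by simp
  qed simp
  also have "\<dots> = (\<Prod>k<?n. B_sign ori (ds ! k) (ds ! ((k + 1) mod ?n)))"
    by (rule prod_cyc_cancel) (simp add: e_def psign_pm)
  finally show "(\<Prod>k<?n. B_sign orj (map ((`) f) ds ! k) (map ((`) f) ds ! ((k + 1) mod ?n))) =
    (\<Prod>k<?n. B_sign ori (ds ! k) (ds ! ((k + 1) mod ?n)))" .
qed

lemma balanced_emb:
  assumes f: "inj f" and o1: "orientation Kc ori" and o2: "orientation K orj"
    and emb: "\<forall>Z\<in>Kc. f ` Z \<in> K" and bal: "B_balanced K i orj"
  shows "B_balanced Kc i ori"
  unfolding B_balanced_def
proof (intro allI impI)
  fix ds assume "B_cycle Kc i ds"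
  note ce = cycle_emb[OF f o1 o2 emb this]
  have "(\<Prod>k<length (map ((`) f) ds). B_sign orj (map ((`) f) ds ! k) (map ((`) f) ds ! ((k + 1) mod length (map ((`) f) ds)))) = 1"
    using bal ce unfolding B_balanced_def by blast
  then show "(\<Prod>k<length ds. B_sign ori (ds ! k) (ds ! ((k + 1) mod length ds))) = 1"
    using ce by (simp only: length_map)
qed

lemma sc_sub: "simplicial_complex K \<Longrightarrow> G \<in> K \<Longrightarrow> F \<subseteq> G \<Longrightarrow> F \<noteq> {} \<Longrightarrow> F \<in> K"
  unfolding simplicial_complex_def by blast

lemma sc_vertex: "simplicial_complex K \<Longrightarrow> B_connected K i \<Longrightarrow> \<exists>v. v \<in> vertices K"
proof -
  assume s: "simplicial_complex K" and c: "B_connected K i"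
  then obtain X where "X \<in> B_verts K i" unfolding B_connected_def by blast
  then have "X \<in> K" "card X > 0" by (auto simp: B_verts_def faces_of_dim_def)
  then obtain v where "v \<in> X" by (metis card.empty ex_in_conv less_irrefl)
  then show ?thesis using \<open>X \<in> K\<close> by (auto simp: vertices_def)
qed

lemma cart_cases:
  assumes "Y \<in> cart_prod K1 K2"
  obtains (A) G v where "G \<in> K1" "v \<in> vertices K2" "Y = (\<lambda>u. (u, v)) ` G"
        | (B) u G where "u \<in> vertices K1" "G \<in> K2" "Y = (\<lambda>v. (u, v)) ` G"
  using assms unfolding cart_prod_def by blast

lemma emb1: "v \<in> vertices K2 \<Longrightarrow> \<forall>Z\<in>K1. (\<lambda>u. (u, v)) ` Z \<in> cart_prod K1 K2"
  unfolding cart_prod_def by blast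

lemma emb2: "u \<in> vertices K1 \<Longrightarrow> \<forall>Z\<in>K2. (\<lambda>v. (u, v)) ` Z \<in> cart_prod K1 K2"
  unfolding cart_prod_def by blast

lemma inj1: "inj (\<lambda>u. (u, v))" by (simp add: inj_def)
lemma inj2: "inj (\<lambda>v. (u, v))" by (simp add: inj_def)

lemma pot_from_key:
  assumes key: "\<And>X Y. X \<in> faces_of_dim K i \<Longrightarrow> Y \<in> faces_of_dim K (i + 1) \<Longrightarrow> X \<subseteq> Y \<Longrightarrow>
      B_sign ori X Y = \<phi> X * \<phi> Y"
  shows "\<forall>X Y. B_adj K i X Y \<longrightarrow> B_sign ori X Y = \<phi> X * (\<phi> Y :: int)"
proof (intro allI impI)
  fix X Y assume a: "B_adj K i X Y"
  then show "B_sign ori X Y = \<phi> X * \<phi> Y" unfolding B_adj_def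
  proof
    assume "X \<in> faces_of_dim K i \<and> Y \<in> faces_of_dim K (i + 1) \<and> X \<subseteq> Y"
    then show ?thesis using key by blast
  next
    assume "Y \<in> faces_of_dim K i \<and> X \<in> faces_of_dim K (i + 1) \<and> Y \<subseteq> X"
    then have "B_sign ori Y X = \<phi> Y * \<phi> X" using key by blast
    then show ?thesis using B_sign_sym[OF a] by (simp add: mult.commute)
  qed
qed

lemma alg_pm:
  fixes sp sh cp ch :: int
  assumes "sh * sh = 1" "sp * sh = -1" "cp * ch = -1"
  shows "sp = cp * (sh * ch)"
proof -
  have "sp = sp * (sh * sh)" using assms(1) by simp
  also have "\<dots> = (sp * sh) * sh" by (simp only: mult.assoc)
  also have "\<dots> = - sh" using assms(2) by simp
  also have "\<dots> = sh * (cp * ch)" using assms(3) by simp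
  also have "\<dots> = cp * (sh * ch)" by (simp only: mult_ac)
  finally show ?thesis .
qed

lemma pm_mult: "(x::int) = 1 \<or> x = -1 \<Longrightarrow> y = 1 \<or> y = -1 \<Longrightarrow> x * y = 1 \<or> x * y = -1" by auto

lemma pm_sq: "(x::int) = 1 \<or> x = -1 \<Longrightarrow> x * x = 1" by auto

lemma edge_pm:
  fixes \<phi> :: "'a set \<Rightarrow> int"
  assumes sc: "simplicial_complex K" and o: "orientation K ori"
    and pm: "\<forall>X. \<phi> X = 1 \<or> \<phi> X = -1"
    and pot: "\<forall>X Y. B_adj K 0 X Y \<longrightarrow> B_sign ori X Y = \<phi> X * \<phi> Y"
    and G: "G \<in> K" "G = {a, b}" "a \<noteq> b"
  shows "\<phi> {a} * \<phi> {b} = -1"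
proof -
  have ab: "{a} \<in> K" "{b} \<in> K" using sc_sub[OF sc G(1)] G(2) by auto
  have adj: "B_adj K 0 {a} G" "B_adj K 0 {b} G" using ab G
    by (auto simp: B_adj_def faces_of_dim_def)
  have "B_sign ori {a} {a,b} * B_sign ori {b} {a,b} = -1"
    by (rule pair_sign) (use orientationD[OF o] ab G in auto)
  then have "\<phi> {a} * \<phi> G * (\<phi> {b} * \<phi> G) = -1" using pot adj G(2) by simp
  then have "\<phi> {a} * \<phi> {b} * (\<phi> G * \<phi> G) = -1" by (simp only: mult_ac)
  then show ?thesis using pm_sq[of "\<phi> G"] pm by simp
qed

theorem mainTheorem13:
  fixes K1 :: "'a set set" and K2 :: "'b set set" and i :: nat
    and o1 :: "'a set \<Rightarrow> 'a list" and o2 :: "'b set \<Rightarrow> 'b list"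
    and o12 :: "('a \<times> 'b) set \<Rightarrow> ('a \<times> 'b) list"
  assumes "simplicial_complex K1" and "simplicial_complex K2"
    and "B_connected K1 i" and "B_connected K2 i"
    and "orientation K1 o1" and "orientation K2 o2"
    and "orientation (cart_prod K1 K2) o12"
  shows "B_balanced (cart_prod K1 K2) i o12 \<longleftrightarrow> B_balanced K1 i o1 \<and> B_balanced K2 i o2"
proof -
  note sc1 = assms(1) and sc2 = assms(2) and c1 = assms(3) and c2 = assms(4)
    and or1 = assms(5) and or2 = assms(6) and or12 = assms(7)
  let ?K = "cart_prod K1 K2"
  obtain v0 where v0: "v0 \<in> vertices K2" using sc_vertex[OF sc2 c2] by blast
  obtain u0 where u0: "u0 \<in> vertices K1" using sc_vertex[OF sc1 c1] by blast
  show ?thesis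
  proof
    assume bal: "B_balanced ?K i o12"
    show "B_balanced K1 i o1 \<and> B_balanced K2 i o2"
      using balanced_emb[OF inj1 or1 or12 emb1[OF v0] bal]
        balanced_emb[OF inj2 or2 or12 emb2[OF u0] bal] by blast
  next
    assume bb: "B_balanced K1 i o1 \<and> B_balanced K2 i o2"
    obtain \<phi>1 where
      p1: "\<forall>X. \<phi>1 X = (1::int) \<or> \<phi>1 X = -1" "\<forall>X Y. B_adj K1 i X Y \<longrightarrow> B_sign o1 X Y = \<phi>1 X * \<phi>1 Y"
      using potential_B[OF c1, of o1] bb by blast
    obtain \<phi>2 where
      p2: "\<forall>X. \<phi>2 X = (1::int) \<or> \<phi>2 X = -1" "\<forall>X Y. B_adj K2 i X Y \<longrightarrow> B_sign o2 X Y = \<phi>2 X * \<phi>2 Y"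
      using potential_B[OF c2, of o2] bb by blast
    show "B_balanced ?K i o12"
    proof (cases "i = 0")
      case False
      define \<phi> where "\<phi> X = (if card (snd ` X) = 1
          then \<phi>1 (fst ` X) * psign (o12 X) (map (\<lambda>u. (u, the_elem (snd ` X))) (o1 (fst ` X)))
          else \<phi>2 (snd ` X) * psign (o12 X) (map (\<lambda>v. (the_elem (fst ` X), v)) (o2 (snd ` X))))" for X
      have pm: "\<forall>X. \<phi> X = 1 \<or> \<phi> X = -1"
      proof
        fix X
        show "\<phi> X = 1 \<or> \<phi> X = -1"
        proof (cases "card (snd ` X) = 1")
          case True
          then have e: "\<phi> X = \<phi>1 (fst ` X) * psign (o12 X) (map (\<lambda>u. (u, the_elem (snd ` X))) (o1 (fst ` X)))"
            unfolding \<phi>_def by simp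
          show ?thesis unfolding e by (rule pm_mult[OF p1(1)[rule_format] psign_pm])
        next
          case False
          then have e: "\<phi> X = \<phi>2 (snd ` X) * psign (o12 X) (map (\<lambda>v. (the_elem (fst ` X), v)) (o2 (snd ` X)))"
            unfolding \<phi>_def by simp
          show ?thesis unfolding e by (rule pm_mult[OF p2(1)[rule_format] psign_pm])
        qed
      qed
      have key: "B_sign o12 X Y = \<phi> X * \<phi> Y"
        if XY: "X \<in> faces_of_dim ?K i" "Y \<in> faces_of_dim ?K (i + 1)" "X \<subseteq> Y" for X Y
      proof -
        have Y: "Y \<in> ?K" "card Y = i + 2" "card X = i + 1" using XY by (auto simp: faces_of_dim_def)
        from Y(1) show ?thesis
        proof (cases rule: cart_cases)
          case (A G v)
          let ?f = "\<lambda>u. (u, v)"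
          have sndX: "\<forall>p\<in>X. snd p = v" using XY(3) A(3) by auto
          define F where "F = fst ` X"
          have Xf0: "X = ?f ` (fst ` X)"
          proof
            show "X \<subseteq> ?f ` (fst ` X)"
            proof
              fix p assume "p \<in> X"
              then show "p \<in> ?f ` (fst ` X)" using sndX by (metis image_eqI prod.collapse)
            qed
            show "?f ` (fst ` X) \<subseteq> X"
            proof
              fix q assume "q \<in> ?f ` (fst ` X)"
              then obtain p where "p \<in> X" "q = (fst p, v)" by auto
              then show "q \<in> X" using sndX by (metis prod.collapse)
            qed
          qed
          have Xf: "X = ?f ` F" using Xf0 unfolding F_def .
          have "card (?f ` F) = card F" by (rule card_image) (simp add: inj_on_def)
          then have cF: "card F = i + 1" using Y(3) Xf by simp
          have FG: "F \<subseteq> G" using XY(3) A(3) unfolding F_def by auto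
          have Fne: "F \<noteq> {}" using cF by auto
          have FK: "F \<in> K1" using sc_sub[OF sc1 A(1) FG Fne] .
          have cG: "card G = i + 2" using Y(2) A(3) card_image[OF inj_on_subset[OF inj1 subset_UNIV]] by metis
          have adj: "B_adj K1 i F G" using FK A(1) cF cG FG by (simp add: B_adj_def faces_of_dim_def)
          have Gne: "G \<noteq> {}" using cG by auto
          have sX: "snd ` X = {v}" using Xf Fne by (auto simp: image_image)
          have sY: "snd ` Y = {v}" using A(3) Gne by (auto simp: image_image)
          have fY: "fst ` Y = G" using A(3) by (simp add: image_image)
          have phX: "\<phi> X = \<phi>1 F * psign (o12 X) (map ?f (o1 F))" unfolding \<phi>_def sX F_def[symmetric] by simp
          have phY: "\<phi> Y = \<phi>1 G * psign (o12 Y) (map ?f (o1 G))" unfolding \<phi>_def sY fY by simp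
          have "B_sign o12 X Y = psign (o12 X) (map ?f (o1 F)) * psign (o12 Y) (map ?f (o1 G)) * B_sign o1 F G"
            using B_edge[OF inj1 or1 or12 emb1[OF A(2)] adj] Xf A(3) by simp
          also have "\<dots> = \<phi> X * \<phi> Y" unfolding phX phY using p1(2) adj by (simp add: mult_ac)
          finally show ?thesis .
        next
          case (B u G)
          let ?f = "\<lambda>v. (u, v)"
          have fstX: "\<forall>p\<in>X. fst p = u" using XY(3) B(3) by auto
          define F where "F = snd ` X"
          have Xf0: "X = ?f ` (snd ` X)"
          proof
            show "X \<subseteq> ?f ` (snd ` X)"
            proof
              fix p assume "p \<in> X"
              then show "p \<in> ?f ` (snd ` X)" using fstX by (metis image_eqI prod.collapse)
            qed
            show "?f ` (snd ` X) \<subseteq> X"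
            proof
              fix q assume "q \<in> ?f ` (snd ` X)"
              then obtain p where "p \<in> X" "q = (u, snd p)" by auto
              then show "q \<in> X" using fstX by (metis prod.collapse)
            qed
          qed
          have Xf: "X = ?f ` F" using Xf0 unfolding F_def .
          have "card (?f ` F) = card F" by (rule card_image) (simp add: inj_on_def)
          then have cF: "card F = i + 1" using Y(3) Xf by simp
          have FG: "F \<subseteq> G" using XY(3) B(3) unfolding F_def by auto
          have Fne: "F \<noteq> {}" using cF by auto
          have FK: "F \<in> K2" using sc_sub[OF sc2 B(2) FG Fne] .
          have cG: "card G = i + 2" using Y(2) B(3) card_image[OF inj_on_subset[OF inj2 subset_UNIV]] by metis
          have adj: "B_adj K2 i F G" using FK B(2) cF cG FG by (simp add: B_adj_def faces_of_dim_def)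
          have Gne: "G \<noteq> {}" using cG by auto
          have fX: "fst ` X = {u}" using Xf Fne by (auto simp: image_image)
          have fY: "fst ` Y = {u}" using B(3) Gne by (auto simp: image_image)
          have sY: "snd ` Y = G" using B(3) by (simp add: image_image)
          have n1: "card (snd ` X) \<noteq> 1" using cF False F_def by simp
          have n2: "card (snd ` Y) \<noteq> 1" using cG sY by simp
          have n1': "card (snd ` X) \<noteq> 1" using n1 .
          have phX: "\<phi> X = \<phi>2 F * psign (o12 X) (map ?f (o2 F))" unfolding \<phi>_def fX F_def[symmetric] using cF False by simp
          have phY: "\<phi> Y = \<phi>2 G * psign (o12 Y) (map ?f (o2 G))" unfolding \<phi>_def sY fY using n2 sY by simp
          have "B_sign o12 X Y = psign (o12 X) (map ?f (o2 F)) * psign (o12 Y) (map ?f (o2 G)) * B_sign o2 F G"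
            using B_edge[OF inj2 or2 or12 emb2[OF B(1)] adj] Xf B(3) by simp
          also have "\<dots> = \<phi> X * \<phi> Y" unfolding phX phY using p2(2) adj by (simp add: mult_ac)
          finally show ?thesis .
        qed
      qed
      show ?thesis by (rule balanced_from_potential[OF pm pot_from_key[OF key]])
    next
      case True
      define c where "c p = \<phi>1 {fst p} * \<phi>2 {snd p}" for p
      define \<phi> where "\<phi> X = (if card X = 1 then c (the_elem X)
          else B_sign o12 {hd (o12 X)} X * c (hd (o12 X)))" for X
      have cpm: "\<forall>p. c p = 1 \<or> c p = -1" unfolding c_def
        using pm_mult[OF p1(1)[rule_format] p2(1)[rule_format]] by blast
      have pm: "\<forall>X. \<phi> X = 1 \<or> \<phi> X = -1"
      proof
        fix X
        show "\<phi> X = 1 \<or> \<phi> X = -1"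
        proof (cases "card X = 1")
          case True
          then have e: "\<phi> X = c (the_elem X)" unfolding \<phi>_def by simp
          show ?thesis unfolding e using cpm by blast
        next
          case False
          then have e: "\<phi> X = B_sign o12 {hd (o12 X)} X * c (hd (o12 X))" unfolding \<phi>_def by simp
          show ?thesis unfolding e by (rule pm_mult[OF B_sign_pm cpm[rule_format]])
        qed
      qed
      have p10: "\<forall>X Y. B_adj K1 0 X Y \<longrightarrow> B_sign o1 X Y = \<phi>1 X * \<phi>1 Y" using p1(2) True by simp
      have p20: "\<forall>X Y. B_adj K2 0 X Y \<longrightarrow> B_sign o2 X Y = \<phi>2 X * \<phi>2 Y" using p2(2) True by simp
      have key: "B_sign o12 X Y = \<phi> X * \<phi> Y"
        if XY: "X \<in> faces_of_dim ?K 0" "Y \<in> faces_of_dim ?K (0 + 1)" "X \<subseteq> Y" for X Y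
      proof -
        have Y: "Y \<in> ?K" "card Y = 2" "card X = 1" "X \<in> ?K" using XY by (auto simp: faces_of_dim_def)
        obtain p where Xp: "X = {p}" using Y(3) card_1_singletonE by blast
        have pY: "p \<in> Y" using XY(3) Xp by auto
        have oY: "distinct (o12 Y)" "set (o12 Y) = Y" using orientationD[OF or12 Y(1)] by auto
        define h where "h = hd (o12 Y)"
        have Yne: "Y \<noteq> {}" using Y(2) by auto
        have hY: "h \<in> Y" unfolding h_def using oY Yne by (metis hd_in_set set_empty)
        have phX: "\<phi> X = c p" unfolding \<phi>_def Xp by simp
        have phY: "\<phi> Y = B_sign o12 {h} Y * c h" unfolding \<phi>_def h_def using Y(2) by simp
        show ?thesis
        proof (cases "h = p")
          case True
          have sq: "c p * c p = 1" using pm_sq[of "c p"] cpm by blast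
          have "\<phi> X * \<phi> Y = B_sign o12 {p} Y * (c p * c p)" unfolding phX phY True by (simp only: mult_ac)
          then show ?thesis unfolding sq Xp by simp
        next
          case hp: False
          have finY: "finite Y" using Y(2) card_ge_0_finite by force
          have Yph: "Y = {p, h}"
          proof -
            have "{p, h} \<subseteq> Y" using pY hY by auto
            moreover have "card {p, h} = card Y" using hp Y(2) by auto
            ultimately show ?thesis using card_subset_eq[OF finY] by metis
          qed
          have cc: "c p * c h = -1" using Y(1)
          proof (cases rule: cart_cases)
            case (A G v)
            obtain a where a: "a \<in> G" "p = (a, v)" using pY A(3) by auto
            obtain b where b: "b \<in> G" "h = (b, v)" using hY A(3) by auto
            have ab: "a \<noteq> b" using hp a b by auto
            have cG: "card G = 2" using Y(2) A(3) card_image[OF inj_on_subset[OF inj1 subset_UNIV]] by metis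
            have fin: "finite G" using cG card_ge_0_finite by force
            have Gab: "G = {a, b}"
            proof -
              have "{a, b} \<subseteq> G" using a b by auto
              moreover have "card {a, b} = card G" using ab cG by auto
              ultimately show ?thesis using card_subset_eq[OF fin] by metis
            qed
            have e: "\<phi>1 {a} * \<phi>1 {b} = -1" by (rule edge_pm[OF sc1 or1 p1(1) p10 A(1) Gab ab])
            have "c p * c h = (\<phi>1 {a} * \<phi>1 {b}) * (\<phi>2 {v} * \<phi>2 {v})"
              unfolding c_def a b by (simp only: fst_conv snd_conv mult_ac)
            then show ?thesis using e pm_sq[of "\<phi>2 {v}"] p2(1) by simp
          next
            case (B u G)
            obtain a where a: "a \<in> G" "p = (u, a)" using pY B(3) by auto
            obtain b where b: "b \<in> G" "h = (u, b)" using hY B(3) by auto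
            have ab: "a \<noteq> b" using hp a b by auto
            have cG: "card G = 2" using Y(2) B(3) card_image[OF inj_on_subset[OF inj2 subset_UNIV]] by metis
            have fin: "finite G" using cG card_ge_0_finite by force
            have Gab: "G = {a, b}"
            proof -
              have "{a, b} \<subseteq> G" using a b by auto
              moreover have "card {a, b} = card G" using ab cG by auto
              ultimately show ?thesis using card_subset_eq[OF fin] by metis
            qed
            have e: "\<phi>2 {a} * \<phi>2 {b} = -1" by (rule edge_pm[OF sc2 or2 p2(1) p20 B(2) Gab ab])
            have "c p * c h = (\<phi>1 {u} * \<phi>1 {u}) * (\<phi>2 {a} * \<phi>2 {b})"
              unfolding c_def a b by (simp only: fst_conv snd_conv mult_ac)
            then show ?thesis using e pm_sq[of "\<phi>1 {u}"] p1(1) by simp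
          qed
          have ph: "{p} \<in> ?K" "{h} \<in> ?K"
          proof -
            have "{p} \<subseteq> Y" "{h} \<subseteq> Y" using pY hY by auto
            show "{p} \<in> ?K" using Xp Y(4) by simp
            show "{h} \<in> ?K" using Y(1)
            proof (cases rule: cart_cases)
              case (A G v)
              obtain b where b: "b \<in> G" "h = (b, v)" using hY A(3) by auto
              have "{b} \<in> K1" using sc_sub[OF sc1 A(1)] b by auto
              then show ?thesis using emb1[OF A(2)] b by force
            next
              case (B u G)
              obtain b where b: "b \<in> G" "h = (u, b)" using hY B(3) by auto
              have "{b} \<in> K2" using sc_sub[OF sc2 B(2)] b by auto
              then show ?thesis using emb2[OF B(1)] b by force
            qed
          qed
          have ss: "B_sign o12 {p} {p,h} * B_sign o12 {h} {p,h} = -1"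
            by (rule pair_sign) (use orientationD[OF or12] ph Y(1) Yph hp in auto)
          have "B_sign o12 {p} Y = c p * (B_sign o12 {h} Y * c h)"
            by (rule alg_pm) (use ss Yph cc pm_sq B_sign_pm in auto)
          then show ?thesis using phX phY Xp by simp
        qed
      qed
      have key': "\<And>X Y. X \<in> faces_of_dim ?K i \<Longrightarrow> Y \<in> faces_of_dim ?K (i + 1) \<Longrightarrow> X \<subseteq> Y \<Longrightarrow>
          B_sign o12 X Y = \<phi> X * \<phi> Y" using key True by simp
      show ?thesis by (rule balanced_from_potential[OF pm pot_from_key[OF key']])
    qed
  qed
qed

end
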